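(* For every integer $k\ge 3$, $\mathcal{C}_2(2k,k,2)\le 2^{2k}+6(2^k-1)$.
   Context: A $q$-covering design $\mathcal{C}_q(n,k,r)$ is a collection of $k$-dimensional subspaces of $\mathbb{F}_q^n$ such that every $r$-dimensional subspace of $\mathbb{F}_q^n$ is contained in at least one member; $\mathcal{C}_q(n,k,r)$ denotes the minimum size of such a collection. *)

theory Defs
  imports "HOL-Analysis.Analysis" "HOL-Library.Z2"
begin

text \<open>The ambient space F_q^n is modelled as the vector type 'a ^ 'n over a field 'a,
  with n = CARD('n).\<close>

definition is_q_covering_design :: "('a::field ^ 'n) set set \<Rightarrow> nat \<Rightarrow> nat \<Rightarrow> bool" where
  "is_q_covering_design C k r \<longleftrightarrow>
     (\<forall>U\<in>C. vec.subspace U \<and> vec.dim U = k) \<and>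
     (\<forall>W::('a ^ 'n) set. vec.subspace W \<and> vec.dim W = r \<longrightarrow> (\<exists>U\<in>C. W \<subseteq> U))"

definition q_covering_number :: "('a::field ^ 'n) itself \<Rightarrow> nat \<Rightarrow> nat \<Rightarrow> nat" where
  "q_covering_number _ k r =
     Inf {card C | C :: ('a ^ 'n) set set. finite C \<and> is_q_covering_design C k r}"

end

theory Submission
  imports Defs "HOL-Algebra.Algebraic_Closure_Type"
begin
type_synonym K = "bit alg_closure"

lemma K_two: "(2::K) = 0"
proof -
  have "(2::K) = to_ac (2::bit)" by (simp only: to_ac_numeral)
  also have "... = 0" by simp
  finally show ?thesis .
qed

lemma K_add_self[simp]: "(x::K) + x = 0"
proof -
  have "x + x = 2 * x" by simp
  thus ?thesis by (simp add: K_two)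
qed

lemma K_neg[simp]: "- (x::K) = x"
  by (metis K_add_self add.inverse_unique)

lemma K_minus[simp]: "(x::K) - y = x + y"
  by (metis K_neg diff_conv_add_uminus)

lemma K_add_self2[simp]: "(x::K) + (x + y) = y"
  by (metis K_add_self add.assoc add_0)

lemma K_add_eq_0_iff[simp]: "(x::K) + y = 0 \<longleftrightarrow> x = y"
proof
  assume "x + y = 0" hence "x + y = x + x" by (simp only: K_add_self)
  thus "x = y" by (metis add_left_cancel)
qed simp

lemma K_frob2: "((x::K) + y)^2 = x^2 + y^2"
  by (simp add: power2_sum K_two)

lemma K_frob: "((x::K) + y)^(2^n) = x^(2^n) + y^(2^n)"
proof (induction n)
  case 0 then show ?case by simp
next
  case (Suc n)
  have "(x+y)^(2^Suc n) = ((x+y)^(2^n))^2" by (simp add: power_mult[symmetric] mult.commute)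
  also have "... = (x^(2^n))^2 + (y^(2^n))^2" using Suc K_frob2 by simp
  also have "... = x^(2^Suc n) + y^(2^Suc n)" by (simp add: power_mult[symmetric] mult.commute)
  finally show ?case .
qed

lemma K_of_nat_pow: "k \<ge> 1 \<Longrightarrow> (of_nat (2^k) :: K) = 0"
  by (simp add: K_two power_0_left)


definition FF :: "nat \<Rightarrow> K set" where "FF k = {x. x^(2^k) = x}"

lemma card_FF: assumes "k \<ge> 1" shows "card (FF k) = 2^k"
proof -
  define p :: "K poly" where "p = Polynomial.monom 1 (2^k) - [:0,1:]"
  have deg: "Polynomial.degree p = 2^k"
  proof -
    have "Polynomial.degree (Polynomial.monom (1::K) (2^k)) = 2^k" by (simp add: degree_monom_eq)
    moreover have "(2::nat)^k \<ge> 2" using assms by (metis power_one_right power_increasing pos2 less_imp_le_nat one_le_numeral)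
    ultimately have "Polynomial.degree (- [:0,1::K:]) < Polynomial.degree (Polynomial.monom (1::K) (2^k))" by simp
    hence "Polynomial.degree (Polynomial.monom (1::K) (2^k) + - [:0,1:]) = 2^k"
      by (subst degree_add_eq_left) (simp_all add: degree_monom_eq)
    thus ?thesis unfolding p_def by (simp only: diff_conv_add_uminus)
  qed
  have lc: "Polynomial.lead_coeff p = 1"
  proof -
    have "(2::nat)^k \<ge> 2" using assms by (metis power_one_right power_increasing pos2 less_imp_le_nat one_le_numeral)
    then have "Polynomial.coeff [:0,1::K:] (2^k) = 0" by (intro coeff_eq_0) simp
    then show ?thesis unfolding deg by (simp add: p_def)
  qed
  have pne: "p \<noteq> 0" using lc by auto
  have polyp: "poly p x = x^(2^k) - x" for x by (simp add: p_def poly_monom)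
  obtain A where A: "size A = Polynomial.degree p" "p = Polynomial.smult (Polynomial.lead_coeff p) (\<Prod>x\<in>#A. [:-x, 1:])"
    using alg_closed_imp_factorization[OF pne] by blast
  have pA: "p = (\<Prod>x\<in>#A. [:-x, 1:])" using A(2) lc by simp
  have roots: "poly p x = 0 \<longleftrightarrow> x \<in># A" for x
    by (subst pA) (auto simp: poly_prod_mset)
  have F: "FF k = set_mset A"
    using roots by (auto simp: FF_def polyp)
  have tk: "(2::K)^k = 0" using assms by (simp add: K_two)
  have dp: "pderiv p = -1"
    using assms tk by (simp add: p_def pderiv_diff pderiv_monom pderiv_pCons K_of_nat_pow one_pCons[symmetric])
  have cnt: "count A x \<le> 1" for x
  proof (rule ccontr)
    assume "\<not> count A x \<le> 1"
    have xA: "x \<in># A"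
    proof (rule ccontr)
      assume "x \<notin># A" hence "count A x = 0" by (simp add: not_in_iff)
      thus False using \<open>\<not> count A x \<le> 1\<close> by simp
    qed
    obtain A1 where A1: "A = add_mset x A1" using multi_member_split[OF xA] by blast
    with \<open>\<not> count A x \<le> 1\<close> have "count A1 x > 0" by (simp del: count_greater_zero_iff)
    hence xA1: "x \<in># A1" by (simp only: count_greater_zero_iff)
    obtain B where B: "A1 = add_mset x B" using multi_member_split[OF xA1] by blast
    define h :: "K poly" where "h = [:-x,1:]"
    define q where "q = (\<Prod>y\<in>#B. [:-y, 1:])"
    have "p = h * (h * q)" using pA A1 B by (simp add: h_def q_def)
    hence "pderiv p = h * pderiv (h*q) + (h*q) * pderiv h" by (simp add: pderiv_mult)
    hence "poly (pderiv p) x = 0" by (simp add: h_def)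
    thus False using dp by simp
  qed
  have "A = mset_set (set_mset A)"
    by (rule multiset_eqI) (use cnt in \<open>auto simp: count_mset_set' not_in_iff intro: antisym\<close>)
  hence "size A = card (set_mset A)" by (metis size_mset_set)
  thus ?thesis using F A(1) deg by simp
qed

lemma FF_0[simp]: "0 \<in> FF k" by (simp add: FF_def)
lemma FF_1[simp]: "1 \<in> FF k" by (simp add: FF_def)
lemma FF_add: "x \<in> FF k \<Longrightarrow> y \<in> FF k \<Longrightarrow> x + y \<in> FF k" by (simp add: FF_def K_frob)
lemma FF_mult: "x \<in> FF k \<Longrightarrow> y \<in> FF k \<Longrightarrow> x * y \<in> FF k" by (simp add: FF_def power_mult_distrib)
lemma FF_inverse: "x \<in> FF k \<Longrightarrow> inverse x \<in> FF k" by (simp add: FF_def power_inverse)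
lemma FF_divide: "x \<in> FF k \<Longrightarrow> y \<in> FF k \<Longrightarrow> x / y \<in> FF k" by (simp add: divide_inverse FF_mult FF_inverse)
lemma FF_power: "x \<in> FF k \<Longrightarrow> x ^ n \<in> FF k" by (induction n) (auto intro: FF_mult)
lemma finite_FF: "k \<ge> 1 \<Longrightarrow> finite (FF k)" using card_FF by (metis card.infinite power_not_zero zero_neq_numeral)


definition sc :: "bit \<Rightarrow> 'b::ab_group_add \<Rightarrow> 'b" where "sc c x = (if c = 0 then 0 else x)"

lemma bit_cases: "(c::bit) = 0 \<or> c = 1" by (cases c) auto

lemma vs_sc: assumes "\<And>x::'b::ab_group_add. x + x = 0" shows "vector_space (sc :: bit \<Rightarrow> 'b \<Rightarrow> 'b)"
proof
  fix a b :: bit and x y :: 'b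
  show "sc a (x + y) = sc a x + sc a y" by (simp add: sc_def)
  show "sc (a + b) x = sc a x + sc b x"
    using bit_cases[of a] bit_cases[of b] assms by (auto simp: sc_def)
  show "sc a (sc b x) = sc (a * b) x"
    using bit_cases[of a] bit_cases[of b] by (auto simp: sc_def)
  show "sc 1 x = x" by (simp add: sc_def)
qed

lemma (in vector_space) card_span_indep:
  assumes "finite B" "independent B" "finite (UNIV :: 'a set)"
  shows "card (span B) = card (UNIV :: 'a set) ^ card B"
  using assms(1,2)
proof (induction B rule: finite_induct)
  case empty then show ?case by simp
next
  case (insert b B)
  have iB: "independent B" and bB: "b \<notin> span B"
    using insert.prems insert.hyps(2) by (auto simp: independent_insert)
  have eq: "span (insert b B) = (\<lambda>(c,y). scale c b + y) ` (UNIV \<times> span B)"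
  proof (rule Set.set_eqI)
    fix x
    show "x \<in> span (insert b B) \<longleftrightarrow> x \<in> (\<lambda>(c,y). scale c b + y) ` (UNIV \<times> span B)"
    proof
      assume "x \<in> span (insert b B)"
      then obtain c where "x - scale c b \<in> span B" by (auto simp: span_insert)
      thus "x \<in> (\<lambda>(c,y). scale c b + y) ` (UNIV \<times> span B)"
        by (intro image_eqI[of _ _ "(c, x - scale c b)"]) auto
    next
      assume "x \<in> (\<lambda>(c,y). scale c b + y) ` (UNIV \<times> span B)"
      then obtain c y where "y \<in> span B" "x = scale c b + y" by auto
      thus "x \<in> span (insert b B)" unfolding span_insert by (intro CollectI exI[of _ c]) simp
    qed
  qed
  have inj: "inj_on (\<lambda>(c,y). scale c b + y) (UNIV \<times> span B)"
  proof (rule inj_onI, clarify)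
    fix c y c' y'
    assume y: "y \<in> span B" "y' \<in> span B" and e: "scale c b + y = scale c' b + y'"
    have "scale (c - c') b = y' - y" using e by (simp add: scale_left_diff_distrib algebra_simps)
    hence m: "scale (c - c') b \<in> span B" using y by (simp add: span_diff)
    show "c = c' \<and> y = y'"
    proof (cases "c = c'")
      case True thus ?thesis using e by simp
    next
      case False
      hence "scale (inverse (c - c')) (scale (c - c') b) \<in> span B" using m span_scale by blast
      hence "b \<in> span B" using False by simp
      thus ?thesis using bB by simp
    qed
  qed
  have "card (span (insert b B)) = card ((UNIV::'a set) \<times> span B)"
    using Finite_Set.card_image[OF inj] eq by simp
  also have "\<dots> = card (UNIV :: 'a set) * card (span B)" by (simp add: card_cartesian_product)
  also have "\<dots> = card (UNIV :: 'a set) ^ card (insert b B)"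
    using insert.IH[OF iB] insert.hyps by simp
  finally show ?case .
qed

lemma (in vector_space) card_subspace:
  assumes "subspace S" "finite S" "finite (UNIV :: 'a set)"
  shows "card S = card (UNIV :: 'a set) ^ dim S"
proof -
  obtain B where B: "B \<subseteq> S" "independent B" "S \<subseteq> span B" "card B = dim S"
    using basis_exists by blast
  have "span B = S" using span_subspace[OF B(1,3) assms(1)] .
  moreover have "finite B" using B(1) assms(2) finite_subset by blast
  ultimately show ?thesis using card_span_indep[OF _ B(2) assms(3)] B(4) by simp
qed

lemma card_bit: "card (UNIV :: bit set) = 2"
proof -
  have "(UNIV :: bit set) = {0,1}" using bit_cases by auto
  moreover have "card {0::bit,1} = 2" by simp
  ultimately show ?thesis by metis
qed

lemma finite_bit: "finite (UNIV :: bit set)"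
proof -
  have "(UNIV :: bit set) = {0,1}" using bit_cases by auto
  thus ?thesis by (metis finite.emptyI finite.insertI)
qed

lemma pow2_inj: "(2::nat)^a = 2^b \<Longrightarrow> a = b" by simp



definition addf :: "(K \<Rightarrow> bit) \<Rightarrow> bool" where "addf \<nu> \<longleftrightarrow> (\<forall>x y. \<nu> (x + y) = \<nu> x + \<nu> y)"

lemma bit_add_self[simp]: "(b::bit) + b = 0"
  using bit_cases[of b] by auto

lemma addf_0: "addf \<nu> \<Longrightarrow> \<nu> 0 = 0"
  unfolding addf_def by (metis add.right_neutral add_left_cancel)

definition closed_add :: "(K \<times> K) set \<Rightarrow> bool" where
  "closed_add U \<longleftrightarrow> 0 \<in> U \<and> (\<forall>x\<in>U. \<forall>y\<in>U. x + y \<in> U)"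

definition G :: "nat \<Rightarrow> K \<Rightarrow> K \<Rightarrow> (K \<times> K) set" where
  "G k \<alpha> \<beta> = (\<lambda>x. (x, \<alpha>*x + \<beta>*x^2)) ` FF k"

lemma G_props:
  assumes "k \<ge> 1" "\<alpha> \<in> FF k" "\<beta> \<in> FF k"
  shows "closed_add (G k \<alpha> \<beta>)" "G k \<alpha> \<beta> \<subseteq> FF k \<times> FF k" "card (G k \<alpha> \<beta>) = 2^k"
proof -
  show "closed_add (G k \<alpha> \<beta>)"
    unfolding closed_add_def G_def
  proof (intro conjI ballI)
    show "0 \<in> (\<lambda>x. (x, \<alpha>*x + \<beta>*x^2)) ` FF k" by (intro image_eqI[of _ _ 0]) (auto simp: zero_prod_def)
  next
    fix u v assume "u \<in> (\<lambda>x. (x, \<alpha>*x + \<beta>*x^2)) ` FF k" "v \<in> (\<lambda>x. (x, \<alpha>*x + \<beta>*x^2)) ` FF k"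
    then obtain x y where xy: "x \<in> FF k" "y \<in> FF k" "u = (x, \<alpha>*x + \<beta>*x^2)" "v = (y, \<alpha>*y + \<beta>*y^2)" by auto
    have "u + v = (x + y, \<alpha>*(x+y) + \<beta>*(x+y)^2)" using xy by (simp add: K_frob2 algebra_simps)
    thus "u + v \<in> (\<lambda>x. (x, \<alpha>*x + \<beta>*x^2)) ` FF k" using xy FF_add by blast
  qed
  show "G k \<alpha> \<beta> \<subseteq> FF k \<times> FF k"
    using assms by (auto simp: G_def intro!: FF_add FF_mult FF_power)
  have "inj_on (\<lambda>x. (x, \<alpha>*x + \<beta>*x^2)) (FF k)" by (rule inj_onI) simp
  hence "card (G k \<alpha> \<beta>) = card (FF k)" unfolding G_def by (rule Finite_Set.card_image)
  thus "card (G k \<alpha> \<beta>) = 2^k" using card_FF assms(1) by simp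
qed

lemma ring_id1: "((c1::'a::comm_ring_1)*a2^2 + c2*a1^2)*a1 + (c1*a2 + c2*a1)*a1^2 = c1*(a1*a2^2 + a2*a1^2) + (c2*a1^3 + c2*a1^3)"
  by (simp add: algebra_simps power2_eq_square power3_eq_cube)
lemma ring_id2: "((c1::'a::comm_ring_1)*a2^2 + c2*a1^2)*a2 + (c1*a2 + c2*a1)*a2^2 = c2*(a1*a2^2 + a2*a1^2) + (c1*a2^3 + c1*a2^3)"
  by (simp add: algebra_simps power2_eq_square power3_eq_cube)

lemma G_cover:
  assumes "a1 \<in> FF k" "a2 \<in> FF k" "c1 \<in> FF k" "c2 \<in> FF k" "a1 \<noteq> 0" "a2 \<noteq> 0" "a1 \<noteq> a2"
  shows "\<exists>\<alpha>\<in>FF k. \<exists>\<beta>\<in>FF k. (a1,c1) \<in> G k \<alpha> \<beta> \<and> (a2,c2) \<in> G k \<alpha> \<beta>"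
proof -
  define D where "D = a1*a2^2 + a2*a1^2"
  have D: "D = a1*a2*(a1+a2)" by (simp add: D_def power2_eq_square algebra_simps)
  have "a1 + a2 \<noteq> 0" using assms by simp
  hence Dnz: "D \<noteq> 0" using assms D by simp
  define \<alpha> where "\<alpha> = (c1*a2^2 + c2*a1^2)/D"
  define \<beta> where "\<beta> = (c1*a2 + c2*a1)/D"
  have DF: "D \<in> FF k" unfolding D_def using assms by (intro FF_add FF_mult FF_power)
  have aF: "\<alpha> \<in> FF k" unfolding \<alpha>_def using assms DF by (intro FF_divide FF_add FF_mult FF_power)
  have bF: "\<beta> \<in> FF k" unfolding \<beta>_def using assms DF by (intro FF_divide FF_add FF_mult FF_power)
  have e1: "\<alpha>*a1 + \<beta>*a1^2 = c1"
  proof -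
    have "\<alpha>*a1 + \<beta>*a1^2 = ((c1*a2^2 + c2*a1^2)*a1 + (c1*a2 + c2*a1)*a1^2)/D"
      by (simp add: \<alpha>_def \<beta>_def divide_inverse algebra_simps)
    also have "(c1*a2^2 + c2*a1^2)*a1 + (c1*a2 + c2*a1)*a1^2 = c1*D + (c2*a1^3 + c2*a1^3)"
      unfolding D_def by (rule ring_id1)
    also have "c2*a1^3 + c2*a1^3 = 0" by (rule K_add_self)
    finally show ?thesis using Dnz by simp
  qed
  have e2: "\<alpha>*a2 + \<beta>*a2^2 = c2"
  proof -
    have "\<alpha>*a2 + \<beta>*a2^2 = ((c1*a2^2 + c2*a1^2)*a2 + (c1*a2 + c2*a1)*a2^2)/D"
      by (simp add: \<alpha>_def \<beta>_def divide_inverse algebra_simps)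
    also have "(c1*a2^2 + c2*a1^2)*a2 + (c1*a2 + c2*a1)*a2^2 = c2*D + (c1*a2^3 + c1*a2^3)"
      unfolding D_def by (rule ring_id2)
    also have "c1*a2^3 + c1*a2^3 = 0" by (rule K_add_self)
    finally show ?thesis using Dnz by simp
  qed
  have "(a1,c1) \<in> G k \<alpha> \<beta>" unfolding G_def using e1 assms by (auto intro!: image_eqI[of _ _ a1])
  moreover have "(a2,c2) \<in> G k \<alpha> \<beta>" unfolding G_def using e2 assms by (auto intro!: image_eqI[of _ _ a2])
  ultimately show ?thesis using aF bF by blast
qed

definition UU :: "nat \<Rightarrow> K \<Rightarrow> (K \<Rightarrow> bit) \<Rightarrow> K \<Rightarrow> (K \<times> K) set" where
  "UU k a \<nu> e = (\<lambda>z. (0,z)) ` {z\<in>FF k. \<nu> z = 0} \<union> (\<lambda>z. (a, e + z)) ` {z\<in>FF k. \<nu> z = 0}"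

lemma card_ker:
  assumes "k \<ge> 1" "addf \<nu>" "r \<in> FF k" "\<nu> r = 1"
  shows "2 * card {z\<in>FF k. \<nu> z = 0} = 2^k"
proof -
  let ?Z = "{z\<in>FF k. \<nu> z = 0}"
  have fin: "finite (FF k)" using finite_FF assms by blast
  have eqF: "FF k = ?Z \<union> (\<lambda>z. z + r) ` ?Z"
  proof (rule Set.set_eqI, rule iffI)
    fix x assume x: "x \<in> FF k"
    show "x \<in> ?Z \<union> (\<lambda>z. z + r) ` ?Z"
    proof (cases "\<nu> x = 0")
      case True thus ?thesis using x by blast
    next
      case False
      hence "\<nu> x = 1" using bit_cases by blast
      hence "\<nu> (x + r) = 0" using assms(2,4) by (simp add: addf_def)
      moreover have "x = (x + r) + r" by (simp add: add.assoc)
      ultimately show ?thesis using x assms(3) FF_add by blast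
    qed
  next
    fix x assume "x \<in> ?Z \<union> (\<lambda>z. z + r) ` ?Z"
    thus "x \<in> FF k" using FF_add assms(3) by blast
  qed
  have disj: "?Z \<inter> (\<lambda>z. z + r) ` ?Z = {}" using assms(2,4) by (auto simp: addf_def)
  have cim: "card ((\<lambda>z. z + r) ` ?Z) = card ?Z" by (rule Finite_Set.card_image) (simp add: inj_on_def)
  have finZ: "finite ?Z" using fin by simp
  have "card (?Z \<union> (\<lambda>z. z + r) ` ?Z) = card ?Z + card ((\<lambda>z. z + r) ` ?Z)"
    by (rule card_Un_disjoint) (use finZ disj in auto)
  moreover have "card (FF k) = card (?Z \<union> (\<lambda>z. z + r) ` ?Z)" using eqF by (rule arg_cong)
  ultimately have "card (FF k) = card ?Z + card ?Z" using cim by simp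
  thus ?thesis using card_FF assms(1) by simp
qed

lemma UU_props:
  assumes "k \<ge> 1" "addf \<nu>" "r \<in> FF k" "\<nu> r = 1" "a \<in> FF k" "a \<noteq> 0" "e \<in> FF k"
  shows "closed_add (UU k a \<nu> e)" "UU k a \<nu> e \<subseteq> FF k \<times> FF k" "card (UU k a \<nu> e) = 2^k"
proof -
  let ?Z = "{z\<in>FF k. \<nu> z = 0}"
  have n0: "\<nu> 0 = 0" using addf_0 assms(2) .
  have nadd: "\<nu> (x + y) = \<nu> x + \<nu> y" for x y using assms(2) by (simp add: addf_def)
  show "closed_add (UU k a \<nu> e)"
    unfolding closed_add_def
  proof (intro conjI ballI)
    show "0 \<in> UU k a \<nu> e" unfolding UU_def using n0 by (auto simp: zero_prod_def)
  next
    fix u v assume u: "u \<in> UU k a \<nu> e" and v: "v \<in> UU k a \<nu> e"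
    from u obtain z where z: "z \<in> FF k" "\<nu> z = 0" "u = (0,z) \<or> u = (a, e + z)" unfolding UU_def by blast
    from v obtain w where w: "w \<in> FF k" "\<nu> w = 0" "v = (0,w) \<or> v = (a, e + w)" unfolding UU_def by blast
    have zw: "z + w \<in> ?Z" using z w FF_add nadd by simp
    have "u + v = (0, z + w) \<or> u + v = (a, e + (z + w))"
      using z(3) w(3) by (elim disjE) (simp_all add: algebra_simps K_add_self2)
    thus "u + v \<in> UU k a \<nu> e" unfolding UU_def using zw by blast
  qed
  show "UU k a \<nu> e \<subseteq> FF k \<times> FF k" unfolding UU_def using assms by (auto intro: FF_add)
  have fin: "finite ?Z" using finite_FF assms(1) by simp
  have "card (UU k a \<nu> e) = card ((\<lambda>z. (0::K,z)) ` ?Z) + card ((\<lambda>z. (a, e + z)) ` ?Z)"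
    unfolding UU_def by (rule card_Un_disjoint) (use fin assms(6) in auto)
  also have "\<dots> = card ?Z + card ?Z"
    by (subst Finite_Set.card_image, simp add: inj_on_def)+ simp
  also have "\<dots> = 2^k" using card_ker[OF assms(1-4)] by simp
  finally show "card (UU k a \<nu> e) = 2^k" .
qed



interpretation Kvs: vector_space "sc :: bit \<Rightarrow> K \<Rightarrow> K" by (rule vs_sc) simp

lemma bit_vs: "vector_space (sc :: bit \<Rightarrow> bit \<Rightarrow> bit)" by (rule vs_sc) simp

interpretation KB: vector_space_pair "sc :: bit \<Rightarrow> K \<Rightarrow> K" "sc :: bit \<Rightarrow> bit \<Rightarrow> bit"
  unfolding vector_space_pair_def using Kvs.vector_space_axioms bit_vs by blast

lemma FF_subspace: "Kvs.subspace (FF k)"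
  unfolding Kvs.subspace_def by (auto simp: sc_def intro: FF_add)

lemma dim_FF: assumes "k \<ge> 1" shows "Kvs.dim (FF k) = k"
proof -
  have "card (FF k) = 2 ^ Kvs.dim (FF k)"
    using Kvs.card_subspace[OF FF_subspace finite_FF[OF assms] finite_bit] card_bit by simp
  thus ?thesis using card_FF[OF assms] by simp
qed

lemma functionals:
  assumes "k \<ge> 3"
  shows "\<exists>l1 l2 l3 b1 b2 b3. addf l1 \<and> addf l2 \<and> addf l3 \<and> b1 \<in> FF k \<and> b2 \<in> FF k \<and> b3 \<in> FF k \<and>
     l1 b1 = 1 \<and> l1 b2 = 0 \<and> l1 b3 = 0 \<and> l2 b1 = 0 \<and> l2 b2 = 1 \<and> l2 b3 = 0 \<and>
     l3 b1 = 0 \<and> l3 b2 = 0 \<and> l3 b3 = 1"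
proof -
  obtain B where B: "B \<subseteq> FF k" "Kvs.independent B" "FF k \<subseteq> Kvs.span B" "card B = Kvs.dim (FF k)"
    using Kvs.basis_exists by blast
  have "card B \<ge> Suc (Suc (Suc 0))" using B(4) dim_FF assms by simp
  then obtain b1 B1 where h1: "B = insert b1 B1" "b1 \<notin> B1" "Suc (Suc 0) \<le> card B1"
    using card_le_Suc_iff[THEN iffD1] by blast
  then obtain b2 B2 where h2: "B1 = insert b2 B2" "b2 \<notin> B2" "Suc 0 \<le> card B2"
    using card_le_Suc_iff[THEN iffD1] by blast
  then obtain b3 B3 where h3: "B2 = insert b3 B3" "b3 \<notin> B3"
    using card_le_Suc_iff[THEN iffD1] by blast
  from h1 h2 h3 have bs: "b1 \<in> B" "b2 \<in> B" "b3 \<in> B" "b1 \<noteq> b2" "b1 \<noteq> b3" "b2 \<noteq> b3" by auto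
  have ext: "\<exists>g. addf g \<and> (\<forall>x\<in>B. g x = (if x = b then 1 else 0))" for b
  proof -
    obtain g :: "K \<Rightarrow> bit" where g: "Vector_Spaces.linear (sc::bit\<Rightarrow>K\<Rightarrow>K) (sc::bit\<Rightarrow>bit\<Rightarrow>bit) g" "\<forall>x\<in>B. g x = (if x = b then 1 else 0)"
      using KB.linear_independent_extend[OF B(2), of "\<lambda>x. if x = b then 1 else 0"] by blast
    have "addf g" unfolding addf_def using KB.linear_add[OF g(1)] by blast
    thus ?thesis using g(2) by blast
  qed
  obtain l1 where l1: "addf l1" "\<forall>x\<in>B. l1 x = (if x = b1 then 1 else 0)" using ext by blast
  obtain l2 where l2: "addf l2" "\<forall>x\<in>B. l2 x = (if x = b2 then 1 else 0)" using ext by blast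
  obtain l3 where l3: "addf l3" "\<forall>x\<in>B. l3 x = (if x = b3 then 1 else 0)" using ext by blast
  show ?thesis
    apply (rule exI[of _ l1], rule exI[of _ l2], rule exI[of _ l3])
    apply (rule exI[of _ b1], rule exI[of _ b2], rule exI[of _ b3])
    using l1 l2 l3 bs B(1) by auto
qed


lemma ex_bit: "(\<exists>b::bit. P b) \<longleftrightarrow> P 0 \<or> P 1"
  using bit_cases by metis

lemma bit_brute:
  fixes x1 x2 x3 y1 y2 y3 :: bit
  shows "\<exists>e1 e2 e3. (e1,e2,e3) \<noteq> (0,0,0) \<and> e1*x1+e2*x2+e3*x3 = 0 \<and> e1*y1+e2*y2+e3*y3 = 0"
  using bit_cases[of x1] bit_cases[of x2] bit_cases[of x3] bit_cases[of y1] bit_cases[of y2] bit_cases[of y3]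
  apply (elim disjE)
  apply (simp_all add: ex_bit)
  done

lemma ring_id3: "((p1::'a::comm_semiring_1) + q1) * x1 + (p2 + q2) * x2 + (p3 + q3) * x3 = (p1*x1 + p2*x2 + p3*x3) + (q1*x1 + q2*x2 + q3*x3)"
  by (simp add: algebra_simps)


lemma ring_id4: "(e1::'a::comm_semiring_1)*(x1+y1) + e2*(x2+y2) + e3*(x3+y3) = (e1*x1+e2*x2+e3*x3) + (e1*y1+e2*y2+e3*y3)"
  by (simp add: algebra_simps)

locale CF =
  fixes k :: nat and l1 l2 l3 :: "K \<Rightarrow> bit" and b1 b2 b3 :: K
  assumes k3: "k \<ge> 3"
  and add: "addf l1" "addf l2" "addf l3"
  and bF: "b1 \<in> FF k" "b2 \<in> FF k" "b3 \<in> FF k"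
  and vals: "l1 b1 = 1" "l1 b2 = 0" "l1 b3 = 0" "l2 b1 = 0" "l2 b2 = 1" "l2 b3 = 0"
     "l3 b1 = 0" "l3 b2 = 0" "l3 b3 = 1"
begin

definition comb :: "bit \<times> bit \<times> bit \<Rightarrow> K \<Rightarrow> bit" where
  "comb e x = fst e * l1 x + fst (snd e) * l2 x + snd (snd e) * l3 x"

definition b4 where "b4 = b1 + b2 + b3"

lemma ladd: "l1 (x + y) = l1 x + l1 y" "l2 (x + y) = l2 x + l2 y" "l3 (x + y) = l3 x + l3 y"
  using add by (auto simp: addf_def)

lemma vals4: "l1 b4 = 1" "l2 b4 = 1" "l3 b4 = 1"
  using vals by (auto simp: b4_def ladd)

lemma comb_add: "addf (comb e)"
  unfolding addf_def comb_def ladd by (intro allI) (rule ring_id4)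

lemma comb_wit: assumes "e \<noteq> (0,0,0)" shows "\<exists>r\<in>FF k. comb e r = 1"
proof -
  obtain e1 e2 e3 where e: "e = (e1,e2,e3)" by (cases e) auto
  show ?thesis
  proof (cases "e1 = 1")
    case True thus ?thesis using bF vals e by (intro bexI[of _ b1]) (auto simp: comb_def)
  next
    case n1: False
    show ?thesis
    proof (cases "e2 = 1")
      case True thus ?thesis using bF vals e n1 bit_cases[of e1] by (intro bexI[of _ b2]) (auto simp: comb_def)
    next
      case False
      hence "e3 = 1" using n1 e assms bit_cases[of e1] bit_cases[of e2] bit_cases[of e3] by auto
      thus ?thesis using bF vals e n1 False bit_cases[of e1] bit_cases[of e2] by (intro bexI[of _ b3]) (auto simp: comb_def)
    qed
  qed
qed

lemma b_distinct: "b1 \<noteq> b2" "b1 \<noteq> b3" "b1 \<noteq> b4" "b2 \<noteq> b3" "b2 \<noteq> b4" "b3 \<noteq> b4"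
  using vals vals4 by (metis zero_neq_one)+

lemma b_nz: "b1 \<noteq> 0" "b2 \<noteq> 0" "b3 \<noteq> 0" "b4 \<noteq> 0"
  using vals vals4 addf_0[OF add(1)] addf_0[OF add(2)] addf_0[OF add(3)] by auto

lemma b4F: "b4 \<in> FF k" unfolding b4_def using bF by (intro FF_add)

definition PP :: "K \<Rightarrow> bit \<times> bit \<times> bit" where
  "PP a = (if a = b3 then (0,1,0) else (1,0,0))"
definition QQ :: "K \<Rightarrow> bit \<times> bit \<times> bit" where
  "QQ a = (if a = b2 then (0,0,1) else if a = b3 then (0,0,1) else if a = b4 then (0,1,1) else (0,1,0))"
definition pen :: "K \<Rightarrow> nat \<Rightarrow> bit \<times> bit \<times> bit" where
  "pen a i = (if i = 0 then PP a else if i = 1 then QQ a else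
     (fst (PP a) + fst (QQ a), fst (snd (PP a)) + fst (snd (QQ a)), snd (snd (PP a)) + snd (snd (QQ a))))"

lemma pen_nz: "pen a i \<noteq> (0,0,0)"
  by (auto simp: pen_def PP_def QQ_def)

lemma pen_split: "comb (pen a 2) x = comb (pen a 0) x + comb (pen a 1) x"
proof -
  have "pen a 2 = (fst (PP a) + fst (QQ a), fst (snd (PP a)) + fst (snd (QQ a)), snd (snd (PP a)) + snd (snd (QQ a)))"
    by (simp add: pen_def)
  moreover have "pen a 0 = PP a" "pen a 1 = QQ a" by (simp_all add: pen_def)
  ultimately show ?thesis unfolding comb_def by (simp only: fst_conv snd_conv ring_id3)
qed

lemma pen_zero: "\<exists>i\<in>{0,1,2}. comb (pen a i) d = 0"
proof -
  have "comb (pen a 0) d = 0 \<or> comb (pen a 1) d = 0 \<or> comb (pen a 2) d = 0"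
    using pen_split[of a d] bit_cases[of "comb (pen a 0) d"] bit_cases[of "comb (pen a 1) d"] by auto
  thus ?thesis by auto
qed

lemma pen_special:
  assumes "e \<noteq> (0,0,0)"
  shows "\<exists>a\<in>{b1,b2,b3,b4}. \<exists>i\<in>{0,1,2}. pen a i = e"
proof -
  obtain e1 e2 e3 where e: "e = (e1,e2,e3)" by (cases e) auto
  have P: "PP b1 = (1,0,0)" "PP b2 = (1,0,0)" "PP b3 = (0,1,0)" "PP b4 = (1,0,0)"
    using b_distinct by (auto simp: PP_def)
  have Q: "QQ b1 = (0,1,0)" "QQ b2 = (0,0,1)" "QQ b3 = (0,0,1)" "QQ b4 = (0,1,1)"
    using b_distinct by (auto simp: QQ_def)
  have "e \<in> {pen b1 0, pen b1 1, pen b1 2, pen b2 1, pen b2 2, pen b3 2, pen b4 2}"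
    using assms e bit_cases[of e1] bit_cases[of e2] bit_cases[of e3]
    by (auto simp: pen_def P Q)
  thus ?thesis by blast
qed

definition nu :: "K \<Rightarrow> nat \<Rightarrow> K \<Rightarrow> bit" where "nu a i = comb (pen a i)"
definition rr :: "K \<Rightarrow> nat \<Rightarrow> K" where "rr a i = (SOME r. r \<in> FF k \<and> nu a i r = 1)"
definition EE :: "K \<Rightarrow> nat \<Rightarrow> nat \<Rightarrow> K" where "EE a i j = (if j = 0 then 0 else rr a i)"

lemma rr: "rr a i \<in> FF k" "nu a i (rr a i) = 1"
proof -
  have "\<exists>r. r \<in> FF k \<and> nu a i r = 1" using comb_wit[OF pen_nz] by (auto simp: nu_def)
  from someI_ex[OF this] show "rr a i \<in> FF k" "nu a i (rr a i) = 1" by (auto simp: rr_def)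
qed

lemma EF: "EE a i j \<in> FF k" using rr by (auto simp: EE_def)

definition Cov1 where "Cov1 = (\<lambda>(\<alpha>,\<beta>). G k \<alpha> \<beta>) ` (FF k \<times> FF k)"
definition Cov2 where "Cov2 = (\<lambda>(a,i,j). UU k a (nu a i) (EE a i j)) ` ((FF k - {0}) \<times> {0,1,2::nat} \<times> {0,1::nat})"

lemma k1: "k \<ge> 1" using k3 by simp

lemma Cov1_props: assumes "U \<in> Cov1" shows "closed_add U \<and> U \<subseteq> FF k \<times> FF k \<and> card U = 2^k"
proof -
  from assms obtain \<alpha> \<beta> where "\<alpha> \<in> FF k" "\<beta> \<in> FF k" "U = G k \<alpha> \<beta>" unfolding Cov1_def by auto
  thus ?thesis using G_props[OF k1] by blast
qed

lemma nu_add: "addf (nu a i)" unfolding nu_def by (rule comb_add)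

lemma Cov2_props: assumes "U \<in> Cov2" shows "closed_add U \<and> U \<subseteq> FF k \<times> FF k \<and> card U = 2^k"
proof -
  from assms obtain a i j where "a \<in> FF k" "a \<noteq> 0" "U = UU k a (nu a i) (EE a i j)" unfolding Cov2_def by auto
  thus ?thesis using UU_props[OF k1 nu_add rr(1) rr(2) _ _ EF] by blast
qed


lemma mem0: "z \<in> FF k \<Longrightarrow> \<nu> z = 0 \<Longrightarrow> (0, z) \<in> UU k a \<nu> e"
  unfolding UU_def by blast

lemma mema: "y \<in> FF k \<Longrightarrow> e \<in> FF k \<Longrightarrow> \<nu> (y + e) = 0 \<Longrightarrow> (a, y) \<in> UU k a \<nu> e"
proof -
  assume h: "y \<in> FF k" "e \<in> FF k" "\<nu> (y + e) = 0"
  have "y + e \<in> {z\<in>FF k. \<nu> z = 0}" using h FF_add by blast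
  moreover have "e + (y + e) = y" by (metis K_add_self2 add.commute)
  hence "(a, y) = (a, e + (y + e))" by simp
  ultimately show ?thesis unfolding UU_def by blast
qed

lemma C1:
  assumes "a \<in> FF k" "a \<noteq> 0" "c \<in> FF k" "d \<in> FF k"
  shows "\<exists>U\<in>Cov2. (a, c) \<in> U \<and> (0, d) \<in> U"
proof -
  obtain i where i: "i \<in> {0,1,2}" "nu a i d = 0" using pen_zero[of a d] by (auto simp: nu_def)
  define j :: nat where "j = (if nu a i c = 0 then 0 else 1)"
  have j: "j \<in> {0,1}" by (simp add: j_def)
  have "nu a i (EE a i j) = nu a i c"
    using rr(2)[of a i] addf_0[OF nu_add[of a i]] bit_cases[of "nu a i c"]
    by (auto simp: EE_def j_def)
  hence "nu a i (c + EE a i j) = 0" using nu_add[of a i] by (simp add: addf_def)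
  hence "(a, c) \<in> UU k a (nu a i) (EE a i j)" using assms EF by (intro mema) auto
  moreover have "(0, d) \<in> UU k a (nu a i) (EE a i j)" using assms i by (intro mem0)
  moreover have "(a,i,j) \<in> (FF k - {0}) \<times> {0,1,2::nat} \<times> {0,1::nat}" using assms i j by blast
  hence "UU k a (nu a i) (EE a i j) \<in> Cov2" unfolding Cov2_def by (rule rev_image_eqI) simp
  ultimately show ?thesis by blast
qed

lemma C2:
  assumes "c \<in> FF k" "d \<in> FF k"
  shows "\<exists>U\<in>Cov2. (0, c) \<in> U \<and> (0, d) \<in> U"
proof -
  obtain e1 e2 e3 where e: "(e1,e2,e3) \<noteq> (0,0,0)" "e1*l1 c+e2*l2 c+e3*l3 c = 0" "e1*l1 d+e2*l2 d+e3*l3 d = 0"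
    using bit_brute[of "l1 c" "l2 c" "l3 c" "l1 d" "l2 d" "l3 d"] by blast
  obtain a i where ai: "a \<in> {b1,b2,b3,b4}" "i \<in> {0,1,2}" "pen a i = (e1,e2,e3)"
    using pen_special[OF e(1)] by blast
  have aF: "a \<in> FF k" "a \<noteq> 0" using ai(1) bF b4F b_nz by auto
  have "nu a i c = 0" "nu a i d = 0" using e ai by (simp_all add: nu_def comb_def)
  hence "(0, c) \<in> UU k a (nu a i) (EE a i 0)" "(0, d) \<in> UU k a (nu a i) (EE a i 0)"
    using assms by (auto intro: mem0)
  moreover have "(a,i,0::nat) \<in> (FF k - {0}) \<times> {0,1,2::nat} \<times> {0,1::nat}" using aF ai by blast
  hence "UU k a (nu a i) (EE a i 0) \<in> Cov2" unfolding Cov2_def by (rule rev_image_eqI) simp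
  ultimately show ?thesis by blast
qed

lemma cover:
  assumes "u \<in> FF k \<times> FF k" "v \<in> FF k \<times> FF k" "u \<noteq> v"
  shows "\<exists>U\<in>Cov1 \<union> Cov2. u \<in> U \<and> v \<in> U"
proof -
  obtain a1 c1 a2 c2 where uv: "u = (a1,c1)" "v = (a2,c2)" by (cases u, cases v) auto
  have F: "a1 \<in> FF k" "c1 \<in> FF k" "a2 \<in> FF k" "c2 \<in> FF k" using assms uv by auto
  consider "a1 \<noteq> 0 \<and> a2 \<noteq> 0 \<and> a1 \<noteq> a2" | "a1 = 0 \<and> a2 = 0" | "a1 = 0 \<and> a2 \<noteq> 0" | "a1 \<noteq> 0 \<and> a2 = 0"
    | "a1 \<noteq> 0 \<and> a1 = a2" by blast
  then show ?thesis
  proof cases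
    case 1
    then obtain \<alpha> \<beta> where "\<alpha> \<in> FF k" "\<beta> \<in> FF k" "(a1,c1) \<in> G k \<alpha> \<beta>" "(a2,c2) \<in> G k \<alpha> \<beta>"
      using G_cover[OF F(1,3,2,4)] by blast
    moreover hence "G k \<alpha> \<beta> \<in> Cov1" unfolding Cov1_def by (intro rev_image_eqI[of "(\<alpha>,\<beta>)"]) auto
    ultimately show ?thesis using uv by blast
  next
    case 2 thus ?thesis using C2[OF F(2,4)] uv by blast
  next
    case 3 thus ?thesis using C1[OF F(3) _ F(4,2)] uv by blast
  next
    case 4 thus ?thesis using C1[OF F(1) _ F(2,4)] uv by blast
  next
    case 5
    then obtain U where U: "U \<in> Cov2" "(a1, c1) \<in> U" "(0, c1 + c2) \<in> U"
      using C1[OF F(1) _ F(2) FF_add[OF F(2,4)]] by blast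
    have "closed_add U" using Cov2_props[OF U(1)] by blast
    hence "(a1, c1) + (0, c1 + c2) \<in> U" using U unfolding closed_add_def by blast
    moreover have "(a1, c1) + (0, c1 + c2) = (a2, c2)" using 5 by simp
    ultimately show ?thesis using U uv by auto
  qed
qed

lemma card_Cov: "card (Cov1 \<union> Cov2) \<le> 2^(2*k) + 6*(2^k - 1)" "finite (Cov1 \<union> Cov2)"
proof -
  have fin: "finite (FF k)" using finite_FF k1 .
  have "card Cov1 \<le> card (FF k \<times> FF k)" unfolding Cov1_def by (rule card_image_le) (use fin in simp)
  also have "\<dots> = 2^(2*k)" using card_FF[OF k1] by (simp add: card_cartesian_product power_mult power2_eq_square[symmetric] power_mult_distrib[symmetric] mult.commute power_add[symmetric] mult_2)
  finally have c1: "card Cov1 \<le> 2^(2*k)" .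
  have "card Cov2 \<le> card ((FF k - {0}) \<times> {0,1,2::nat} \<times> {0,1::nat})" unfolding Cov2_def by (rule card_image_le) (use fin in simp)
  also have "\<dots> = (2^k - 1) * 6" using card_FF[OF k1] by (simp add: card_cartesian_product)
  finally have c2: "card Cov2 \<le> 6*(2^k - 1)" by simp
  show "finite (Cov1 \<union> Cov2)" unfolding Cov1_def Cov2_def using fin by simp
  have "card (Cov1 \<union> Cov2) \<le> card Cov1 + card Cov2" by (rule card_Un_le)
  thus "card (Cov1 \<union> Cov2) \<le> 2^(2*k) + 6*(2^k - 1)" using c1 c2 by simp
qed

end

lemma cover_family:
  assumes "k \<ge> 3"
  shows "\<exists>Cov. finite Cov \<and> card Cov \<le> 2^(2*k) + 6*(2^k - 1) \<and>
     (\<forall>U\<in>Cov. closed_add U \<and> U \<subseteq> FF k \<times> FF k \<and> card U = 2^k) \<and>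
     (\<forall>u\<in>FF k \<times> FF k. \<forall>v\<in>FF k \<times> FF k. u \<noteq> v \<longrightarrow> (\<exists>U\<in>Cov. u \<in> U \<and> v \<in> U))"
proof -
  obtain l1 l2 l3 b1 b2 b3 where "addf l1" "addf l2" "addf l3" "b1 \<in> FF k" "b2 \<in> FF k" "b3 \<in> FF k"
     "l1 b1 = 1" "l1 b2 = 0" "l1 b3 = 0" "l2 b1 = 0" "l2 b2 = 1" "l2 b3 = 0"
     "l3 b1 = 0" "l3 b2 = 0" "l3 b3 = 1"
    using functionals[OF assms] by blast
  then interpret CF k l1 l2 l3 b1 b2 b3 using assms by unfold_locales
  have A: "\<forall>U\<in>Cov1 \<union> Cov2. closed_add U \<and> U \<subseteq> FF k \<times> FF k \<and> card U = 2^k"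
    using Cov1_props Cov2_props by blast
  have B: "\<forall>u\<in>FF k \<times> FF k. \<forall>v\<in>FF k \<times> FF k. u \<noteq> v \<longrightarrow> (\<exists>U\<in>Cov1 \<union> Cov2. u \<in> U \<and> v \<in> U)"
    by (intro ballI impI cover)
  show ?thesis by (rule exI[of _ "Cov1 \<union> Cov2"]) (intro conjI card_Cov A B)
qed



lemma sc_subspace_iff:
  assumes "vector_space (sc :: bit \<Rightarrow> 'b::ab_group_add \<Rightarrow> 'b)"
  shows "module.subspace (sc :: bit \<Rightarrow> 'b \<Rightarrow> 'b) U \<longleftrightarrow> 0 \<in> U \<and> (\<forall>x\<in>U. \<forall>y\<in>U. x + y \<in> U)"
proof -
  interpret vector_space "sc :: bit \<Rightarrow> 'b \<Rightarrow> 'b" by fact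
  show ?thesis unfolding subspace_def by (auto simp: sc_def)
qed

lemma KK_vs: "vector_space (sc :: bit \<Rightarrow> K \<times> K \<Rightarrow> K \<times> K)"
proof (rule vs_sc)
  fix x :: "K \<times> K" show "x + x = 0" by (cases x) (simp add: zero_prod_def)
qed

theorem mainTheorem7:
  fixes k :: nat
  assumes "k \<ge> 3" and "CARD('n::finite) = 2 * k"
  shows "q_covering_number TYPE(bit ^ 'n) k 2 \<le> 2 ^ (2 * k) + 6 * (2 ^ k - 1)"
proof -
  obtain Cov where Cov: "finite Cov" "card Cov \<le> 2^(2*k) + 6*(2^k - 1)"
     and CovB: "\<forall>U\<in>Cov. closed_add U \<and> U \<subseteq> FF k \<times> FF k \<and> card U = 2^k"
     and CovC: "\<forall>u\<in>FF k \<times> FF k. \<forall>v\<in>FF k \<times> FF k. u \<noteq> v \<longrightarrow> (\<exists>U\<in>Cov. u \<in> U \<and> v \<in> U)"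
    using cover_family[OF assms(1)] by (elim exE conjE)
  have Cov3: "closed_add U \<and> U \<subseteq> FF k \<times> FF k \<and> card U = 2^k" if "U \<in> Cov" for U
    by (rule bspec[OF CovB that])
  have Cov4: "\<exists>U\<in>Cov. u \<in> U \<and> v \<in> U" if "u\<in>FF k \<times> FF k" "v\<in>FF k \<times> FF k" "u \<noteq> v" for u v
    by (rule mp[OF bspec[OF bspec[OF CovC that(1)] that(2)] that(3)])
  have k1: "k \<ge> 1" using assms by simp
  interpret KK: vector_space "sc :: bit \<Rightarrow> K \<times> K \<Rightarrow> K \<times> K" by (rule KK_vs)
  interpret P: vector_space_pair "(*s) :: bit \<Rightarrow> bit^'n \<Rightarrow> bit^'n" "sc :: bit \<Rightarrow> K \<times> K \<Rightarrow> K \<times> K"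
    unfolding vector_space_pair_def using vec.vector_space_axioms KK_vs by blast
  define S where "S = FF k \<times> FF k"
  have finS: "finite S" unfolding S_def using finite_FF[OF k1] by simp
  have Ssub: "KK.subspace S"
    unfolding sc_subspace_iff[OF KK_vs] S_def by (auto simp: zero_prod_def intro: FF_add)
  have cardS: "card S = 2^(2*k)" unfolding S_def using card_FF[OF k1]
    by (simp add: card_cartesian_product power_add[symmetric] mult_2)
  have dimS: "KK.dim S = 2*k"
    using KK.card_subspace[OF Ssub finS finite_bit] card_bit cardS by simp
  have dimV: "vec.dim (UNIV :: (bit^'n) set) = 2*k" using vec_dim_card[where 'a=bit and 'n='n] assms(2) by simp
  obtain B where B: "B \<subseteq> (UNIV :: (bit^'n) set)" "vec.independent B" "UNIV \<subseteq> vec.span B" "card B = vec.dim (UNIV :: (bit^'n) set)"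
    using vec.basis_exists by blast
  obtain C where C: "C \<subseteq> S" "KK.independent C" "S \<subseteq> KK.span C" "card C = KK.dim S"
    using KK.basis_exists by blast
  have finB: "finite B" using B(4) dimV k1 card.infinite by fastforce
  have finC: "finite C" using C(1) finS finite_subset by blast
  obtain f :: "bit^'n \<Rightarrow> K \<times> K" where f: "Vector_Spaces.linear ((*s) :: bit \<Rightarrow> bit^'n \<Rightarrow> bit^'n) (sc :: bit \<Rightarrow> K \<times> K \<Rightarrow> K \<times> K) f" "f ` UNIV = S" "inj_on f UNIV"
  proof -
    have dims: "vec.dim (UNIV::(bit^'n) set) = KK.dim S" using dimV dimS by simp
    show ?thesis using P.finite_basis_to_basis_subspace_isomorphism[OF vec.subspace_UNIV Ssub dims finB B finC C] that by blast
  qed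
  define CC where "CC = (\<lambda>U. f -` U) ` Cov"
  have finCC: "finite CC" unfolding CC_def using Cov(1) by simp
  have cardCC: "card CC \<le> card Cov" unfolding CC_def by (rule card_image_le[OF Cov(1)])
  have design: "is_q_covering_design CC k 2"
    unfolding is_q_covering_design_def
  proof (intro conjI ballI allI impI)
    fix U' assume "U' \<in> CC"
    then obtain U where U: "U \<in> Cov" "U' = f -` U" unfolding CC_def by blast
    have Up: "closed_add U" "U \<subseteq> S" "card U = 2^k" using Cov3[OF U(1)] S_def by auto
    have Usub: "KK.subspace U" unfolding sc_subspace_iff[OF KK_vs] using Up(1) by (simp add: closed_add_def)
    show "vec.subspace U'" unfolding U(2) by (rule P.linear_subspace_vimage[OF f(1) Usub])
    have bij: "bij_betw f U' U"
      unfolding U(2) bij_betw_def using f(2,3) Up(2) by (auto simp: inj_on_def)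
    have finU': "finite U'" using bij Up(3) k1 bij_betw_finite card.infinite by fastforce
    have "card U' = 2^k" using bij_betw_same_card[OF bij] Up(3) by simp
    moreover have "card U' = 2 ^ vec.dim U'"
      using vec.card_subspace[OF _ finU' finite_bit] \<open>vec.subspace U'\<close> card_bit by simp
    ultimately show "vec.dim U' = k" by simp
  next
    fix W :: "(bit^'n) set" assume W: "vec.subspace W \<and> vec.dim W = 2"
    obtain B2 where B2: "B2 \<subseteq> W" "vec.independent B2" "W \<subseteq> vec.span B2" "card B2 = vec.dim W"
      using vec.basis_exists by blast
    then obtain w1 w2 where w: "B2 = {w1, w2}" "w1 \<noteq> w2" using W card_2_iff by metis
    have fw: "f w1 \<in> FF k \<times> FF k" "f w2 \<in> FF k \<times> FF k" using f(2) S_def by auto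
    have "f w1 \<noteq> f w2" using f(3) w(2) by (auto simp: inj_on_def)
    from Cov4[OF fw this] obtain U where U: "U \<in> Cov" "f w1 \<in> U" "f w2 \<in> U" by blast
    have Up: "closed_add U" using Cov3[OF U(1)] by auto
    have Usub: "KK.subspace U" unfolding sc_subspace_iff[OF KK_vs] using Up(1) by (simp add: closed_add_def)
    have sub: "vec.subspace (f -` U)" by (rule P.linear_subspace_vimage[OF f(1) Usub])
    have "B2 \<subseteq> f -` U" using w U by auto
    hence "vec.span B2 \<subseteq> f -` U" using vec.span_minimal sub by blast
    hence "W \<subseteq> f -` U" using B2(3) by blast
    moreover have "f -` U \<in> CC" unfolding CC_def using U(1) by blast
    ultimately show "\<exists>U'\<in>CC. W \<subseteq> U'" by blast
  qed
  have "q_covering_number TYPE(bit ^ 'n) k 2 \<le> card CC"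
    unfolding q_covering_number_def
    by (rule cInf_lower) (use finCC design in blast, simp)
  thus ?thesis using cardCC Cov(2) by simp
qed


end
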